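(* If $n=2p$ for a prime $p$, then $\pi\ge\lceil r/2\rceil(n-2q-m+1)$.
   Context: $G$ is a set of size $n$ and $G(\circ)$, $G(\ast)$ are distinct groups on $G$ with the same identity element. $\mathrm{diff}(\circ,\ast)=\{(a,b):a\circ b\ne a\ast b\}$, $\mathrm{dist}(\circ,\ast)=|\mathrm{diff}(\circ,\ast)|$, $\mathrm{dist}_a=|\{b:a\circ b\ne a\ast b\}|$; $H=\{a:\mathrm{dist}_a=0\}$, $h=|H|$; $K=\{a:\mathrm{dist}_a<n/3\}$, $k=|K|$; $m=\min\{\mathrm{dist}_a:\mathrm{dist}_a>0\}$. Standing assumption: $m\ge 3$. Let $q=\lceil n/3\rceil$ and the profit $\pi=\mathrm{dist}(\circ,\ast)-((k-h)m+(n-k)q)$. Let $R=\{(a,a)\in\mathrm{diff}(\circ,\ast):a\in K\}$, $r=|R|$. *)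

theory Defs
  imports Complex_Main "HOL-Computational_Algebra.Primes" "HOL-Algebra.Group"
begin

text \<open>Two binary operations f (the paper's circ) and g (the paper's ast) on a carrier G.\<close>

definition diffset :: "'a set \<Rightarrow> ('a \<Rightarrow> 'a \<Rightarrow> 'a) \<Rightarrow> ('a \<Rightarrow> 'a \<Rightarrow> 'a) \<Rightarrow> ('a \<times> 'a) set" where
  "diffset G f g = {(a, b). a \<in> G \<and> b \<in> G \<and> f a b \<noteq> g a b}"

definition distop :: "'a set \<Rightarrow> ('a \<Rightarrow> 'a \<Rightarrow> 'a) \<Rightarrow> ('a \<Rightarrow> 'a \<Rightarrow> 'a) \<Rightarrow> nat" where
  "distop G f g = card (diffset G f g)"

definition dist_at :: "'a set \<Rightarrow> ('a \<Rightarrow> 'a \<Rightarrow> 'a) \<Rightarrow> ('a \<Rightarrow> 'a \<Rightarrow> 'a) \<Rightarrow> 'a \<Rightarrow> nat" where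
  "dist_at G f g a = card {b \<in> G. f a b \<noteq> g a b}"

definition Hset :: "'a set \<Rightarrow> ('a \<Rightarrow> 'a \<Rightarrow> 'a) \<Rightarrow> ('a \<Rightarrow> 'a \<Rightarrow> 'a) \<Rightarrow> 'a set" where
  "Hset G f g = {a \<in> G. dist_at G f g a = 0}"

definition Kset :: "'a set \<Rightarrow> ('a \<Rightarrow> 'a \<Rightarrow> 'a) \<Rightarrow> ('a \<Rightarrow> 'a \<Rightarrow> 'a) \<Rightarrow> 'a set" where
  "Kset G f g = {a \<in> G. real (dist_at G f g a) < real (card G) / 3}"

definition mmin :: "'a set \<Rightarrow> ('a \<Rightarrow> 'a \<Rightarrow> 'a) \<Rightarrow> ('a \<Rightarrow> 'a \<Rightarrow> 'a) \<Rightarrow> nat" where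
  "mmin G f g = Min {dist_at G f g a | a. a \<in> G \<and> dist_at G f g a > 0}"

definition qval :: "'a set \<Rightarrow> int" where
  "qval G = \<lceil>real (card G) / 3\<rceil>"

definition profit :: "'a set \<Rightarrow> ('a \<Rightarrow> 'a \<Rightarrow> 'a) \<Rightarrow> ('a \<Rightarrow> 'a \<Rightarrow> 'a) \<Rightarrow> int" where
  "profit G f g = int (distop G f g)
     - ((int (card (Kset G f g)) - int (card (Hset G f g))) * int (mmin G f g)
        + (int (card G) - int (card (Kset G f g))) * qval G)"

definition Rset :: "'a set \<Rightarrow> ('a \<Rightarrow> 'a \<Rightarrow> 'a) \<Rightarrow> ('a \<Rightarrow> 'a \<Rightarrow> 'a) \<Rightarrow> ('a \<times> 'a) set" where
  "Rset G f g = {(a, a) | a. (a, a) \<in> diffset G f g \<and> a \<in> Kset G f g}"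

end

theory Submission
  imports Defs "HOL-Algebra.Multiplicative_Group"
begin


lemma dvd_2p: assumes "prime (p::nat)" "d dvd 2*p" shows "d=1 \<or> d=2 \<or> d=p \<or> d=2*p"
proof -
  obtain b c where "d = b*c" "b dvd 2" "c dvd p" using division_decomp[OF assms(2)] by blast
  moreover have "b = 1 \<or> b = 2" using \<open>b dvd 2\<close> dvd_imp_le[of b 2] by (cases b) (auto simp: less_Suc_eq_le le_Suc_eq)
  moreover have "c = 1 \<or> c = p" using \<open>c dvd p\<close> assms(1) by (simp add: prime_nat_iff)
  ultimately show ?thesis by auto
qed

lemma (in group) sq_pow: "x \<in> carrier G \<Longrightarrow> x \<otimes> x = x [^] (2::nat)"
  by (simp add: numeral_2_eq_2)

lemma (in group) sqroots_le2:
  assumes fin: "finite (carrier G)" and ord: "card (carrier G) = 2*p" and pr: "prime p"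
    and c: "c \<in> carrier G" "c \<noteq> \<one>"
  shows "card {x \<in> carrier G. x \<otimes> x = c} \<le> 2"
proof (cases "\<exists>x\<in>carrier G. x \<otimes> x = c \<and> ord x = 2*p")
  case True
  then obtain x where x: "x \<in> carrier G" "x \<otimes> x = c" "ord x = 2*p" by blast
  have p2: "p \<ge> 2" using pr prime_ge_2_nat by blast
  have img: "(\<lambda>k. x [^] k) ` {0..ord x - 1} = carrier G"
  proof (rule card_subset_eq[OF fin])
    show "(\<lambda>k. x [^] k) ` {0..ord x - 1} \<subseteq> carrier G" using x by auto
    show "card ((\<lambda>k. x [^] k) ` {0..ord x - 1}) = card (carrier G)"
      using card_image[OF ord_inj[OF x(1)]] x(3) ord p2 by simp
  qed
  have "{y \<in> carrier G. y \<otimes> y = c} \<subseteq> {x, x [^] (p+1)}"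
  proof
    fix y assume y: "y \<in> {y \<in> carrier G. y \<otimes> y = c}"
    then obtain k where k: "k \<le> 2*p - 1" "y = x [^] k" using img x(3) by (metis (no_types, lifting) atLeastAtMost_iff imageE mem_Collect_eq)
    have "x [^] (2*k) = x [^] (2::nat)"
      using y k x by (simp add: sq_pow nat_pow_pow mult.commute)
    hence "x [^] (int (2*k)) = x [^] (int 2)" by (simp only: int_pow_int)
    hence "int (ord x) dvd int 2 - int (2*k)" using int_pow_eq x(1) by blast
    hence "int (2*p) dvd 2 * (1 - int k)" using x(3) by simp
    then obtain t where "2 * (1 - int k) = int (2*p) * t" by (auto elim: dvdE)
    hence t: "1 - int k = int p * t" by simp
    have "t = 0 \<or> t = -1"
    proof (rule ccontr)
      assume "\<not> (t = 0 \<or> t = -1)"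
      hence "t \<ge> 1 \<or> t \<le> -2" by auto
      thus False
      proof
        assume "t \<ge> 1" hence "int p * t \<ge> int p" using p2 by (simp add: mult_le_cancel_left1) 
        thus False using t p2 by linarith
      next
        assume "t \<le> -2" hence "int p * t \<le> int p * (-2)" using p2 by (intro mult_left_mono) auto
        thus False using t k p2 by linarith
      qed
    qed
    hence "k = 1 \<or> k = p + 1" using t by auto
    thus "y \<in> {x, x [^] (p+1)}" using k x by auto
  qed
  moreover have "card {x, x [^] (p+1)} \<le> 2" by (simp add: card_insert_if)
  ultimately show ?thesis using card_mono[of "{x, x [^] (p+1)}"] by (meson finite.emptyI finite.insertI le_trans)
next
  case False
  have "{y \<in> carrier G. y \<otimes> y = c} \<subseteq> {c [^] ((p+1) div 2)}"
  proof
    fix y assume y: "y \<in> {y \<in> carrier G. y \<otimes> y = c}"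
    hence yc: "y \<in> carrier G" "y \<otimes> y = c" by auto
    have "ord y dvd 2*p" using ord_dvd_group_order[OF yc(1)] ord by (simp add: order_def)
    hence o: "ord y = 1 \<or> ord y = 2 \<or> ord y = p \<or> ord y = 2*p" using dvd_2p pr by blast
    have "ord y \<noteq> 2*p" using False yc by blast
    moreover have "ord y \<noteq> 1" using ord_eq_1[OF yc(1)] yc c by auto
    moreover have "ord y \<noteq> 2" using pow_ord_eq_1[OF yc(1)] yc c sq_pow[OF yc(1)] by metis
    ultimately have op: "ord y = p" "p \<noteq> 2" using o by auto
    have "p > 2" using op(2) prime_ge_2_nat[OF pr] by linarith
    hence "odd p" using pr prime_odd_nat by simp
    then obtain j where j: "p = 2*j+1" by (auto elim: oddE)
    have cy: "c = y [^] (2::nat)" using yc sq_pow by metis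
    have "(p+1) div 2 = j+1" using j by simp
    hence "c [^] ((p+1) div 2) = (y [^] (2::nat)) [^] (j+1)" using cy by simp
    also have "\<dots> = y [^] (2 * (j+1))" using yc(1) by (simp only: nat_pow_pow)
    also have "2 * (j+1) = p + 1" using j by simp
    also have "y [^] (p + 1) = y [^] p \<otimes> y [^] (1::nat)" using yc(1) by (simp only: nat_pow_mult)
    also have "\<dots> = y" using yc(1) op pow_ord_eq_1[OF yc(1)] by simp
    finally show "y \<in> {c [^] ((p+1) div 2)}" by simp
  qed
  hence "card {y \<in> carrier G. y \<otimes> y = c} \<le> card {c [^] ((p+1) div 2)}" by (intro card_mono) auto
  thus ?thesis by simp
qed

lemma row_sq:
  fixes G :: "'a set" and f g :: "'a \<Rightarrow> 'a \<Rightarrow> 'a" and e :: 'a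
  assumes fin: "finite G"
    and g1: "group \<lparr>carrier = G, mult = f, one = e\<rparr>"
    and g2: "group \<lparr>carrier = G, mult = g, one = e\<rparr>"
    and a: "a \<in> G" "f a a \<noteq> g a a"
  shows "card G \<le> 2 * dist_at G f g a + dist_at G f g (f a a)"
proof -
  have fcl: "\<And>x y. x\<in>G \<Longrightarrow> y\<in>G \<Longrightarrow> f x y \<in> G"
    using monoid.m_closed[OF group.is_monoid[OF g1]] by fastforce
  have gcl: "\<And>x y. x\<in>G \<Longrightarrow> y\<in>G \<Longrightarrow> g x y \<in> G"
    using monoid.m_closed[OF group.is_monoid[OF g2]] by fastforce
  have fas: "\<And>x y z. x\<in>G \<Longrightarrow> y\<in>G \<Longrightarrow> z\<in>G \<Longrightarrow> f (f x y) z = f x (f y z)"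
    using monoid.m_assoc[OF group.is_monoid[OF g1]] by fastforce
  have gas: "\<And>x y z. x\<in>G \<Longrightarrow> y\<in>G \<Longrightarrow> z\<in>G \<Longrightarrow> g (g x y) z = g x (g y z)"
    using monoid.m_assoc[OF group.is_monoid[OF g2]] by fastforce
  have fcan: "\<And>x y z. x\<in>G \<Longrightarrow> y\<in>G \<Longrightarrow> z\<in>G \<Longrightarrow> f x y = f x z \<Longrightarrow> y = z"
    using monoid.Units_l_cancel[OF group.is_monoid[OF g1]] group.Units_eq[OF g1] by fastforce
  have gcan: "\<And>x y z. x\<in>G \<Longrightarrow> y\<in>G \<Longrightarrow> z\<in>G \<Longrightarrow> g y x = g z x \<Longrightarrow> y = z"
    using group.right_cancel[OF g2] by fastforce
  define D where "D = {b\<in>G. f a b \<noteq> g a b}"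
  define c where "c = f a a"
  define T where "T = {x\<in>G. f a x = g a x \<and> f a (f a x) = g a (f a x)}"
  define E where "E = {x\<in>G. f a x \<in> D}"
  have cG: "c \<in> G" "g a a \<in> G" using a fcl gcl c_def by auto
  have TD: "T \<subseteq> {x\<in>G. f c x \<noteq> g c x}"
  proof
    fix x assume x: "x \<in> T"
    hence xG: "x \<in> G" and e1: "f a x = g a x" and e2: "f a (f a x) = g a (f a x)" by (auto simp: T_def)
    have "g (g a a) x = g a (g a x)" using gas a xG by blast
    also have "\<dots> = g a (f a x)" using e1 by simp
    also have "\<dots> = f a (f a x)" using e2 by simp
    also have "\<dots> = f c x" using fas a xG c_def by simp
    finally have h: "g (g a a) x = f c x" .
    have "g c x \<noteq> g (g a a) x" using gcan[OF xG cG(1) cG(2)] a(2) c_def by metis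
    thus "x \<in> {x\<in>G. f c x \<noteq> g c x}" using h xG by auto
  qed
  have GT: "G - T \<subseteq> D \<union> E" by (auto simp: T_def D_def E_def fcl gcl a)
  have "f a ` E \<subseteq> D" by (auto simp: E_def)
  moreover have "inj_on (f a) E" by (rule inj_onI) (use fcan a in \<open>auto simp: E_def\<close>)
  ultimately have cE: "card E \<le> card D"
  proof -
    assume h1: "f a ` E \<subseteq> D" and h2: "inj_on (f a) E"
    have "card E = card (f a ` E)" using h2 by (simp add: card_image)
    also have "\<dots> \<le> card D" using h1 fin by (intro card_mono) (auto simp: D_def)
    finally show ?thesis .
  qed
  have TG: "T \<subseteq> G" by (auto simp: T_def)
  have finT: "finite T" using TG fin by (rule finite_subset)
  have "card G = card (T \<union> (G - T))" using TG by (simp add: Un_Diff_cancel2 sup.absorb2)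
  also have "\<dots> = card T + card (G - T)" using finT fin by (intro card_Un_disjoint) auto
  finally have "card G = card T + card (G - T)" .
  also have "card T \<le> dist_at G f g c" unfolding dist_at_def using TD fin by (intro card_mono) auto
  also have "card (G - T) \<le> card D + card E"
  proof -
    have "card (G - T) \<le> card (D \<union> E)" using GT fin by (intro card_mono) (auto simp: D_def E_def)
    also have "\<dots> \<le> card D + card E" by (rule card_Un_le)
    finally show ?thesis .
  qed
  finally show ?thesis using cE by (simp add: dist_at_def D_def c_def)
qed

theorem lemma9p3:
  fixes G :: "'a set" and f g :: "'a \<Rightarrow> 'a \<Rightarrow> 'a" and e :: 'a and p :: nat
  assumes "finite G"
    and "group \<lparr>carrier = G, mult = f, one = e\<rparr>"
    and "group \<lparr>carrier = G, mult = g, one = e\<rparr>"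
    and "\<exists>a\<in>G. \<exists>b\<in>G. f a b \<noteq> g a b"
    and "mmin G f g \<ge> 3"
    and "prime p" and "card G = 2 * p"
  shows "profit G f g \<ge> \<lceil>real (card (Rset G f g)) / 2\<rceil>
           * (int (card G) - 2 * qval G - int (mmin G f g) + 1)"
proof -
  note fin = assms(1) and g1 = assms(2) and g2 = assms(3)
  define n where "n = card G"
  define d where "d = dist_at G f g"
  define K where "K = Kset G f g"
  define H where "H = Hset G f g"
  define m where "m = mmin G f g"
  define q where "q = qval G"
  define X where "X = int n - 2 * q - int m + 1"
  have eG: "e \<in> G" using monoid.one_closed[OF group.is_monoid[OF g1]] by simp
  have fone: "\<And>b. b \<in> G \<Longrightarrow> f e b = b" using monoid.l_one[OF group.is_monoid[OF g1]] by fastforce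
  have gone: "\<And>b. b \<in> G \<Longrightarrow> g e b = b" using monoid.l_one[OF group.is_monoid[OF g2]] by fastforce
  have fcl: "\<And>x y. x\<in>G \<Longrightarrow> y\<in>G \<Longrightarrow> f x y \<in> G"
    using monoid.m_closed[OF group.is_monoid[OF g1]] by fastforce
  have npos: "n > 0" using eG fin n_def card_gt_0_iff by blast
  have de: "d e = 0"
  proof -
    have "{b \<in> G. f e b \<noteq> g e b} = {}" using fone gone by auto
    thus ?thesis unfolding d_def dist_at_def by (simp only: card.empty)
  qed
  have dpos: "\<And>a b. a \<in> G \<Longrightarrow> b \<in> G \<Longrightarrow> f a b \<noteq> g a b \<Longrightarrow> d a > 0"
    unfolding d_def dist_at_def using fin by (subst card_gt_0_iff) auto
  have KG: "K \<subseteq> G" and HG: "H \<subseteq> G" by (auto simp: K_def H_def Kset_def Hset_def)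
  have HK: "H \<subseteq> K" using npos by (auto simp: K_def H_def Kset_def Hset_def d_def n_def)
  have eK: "e \<in> K" using eG de npos by (simp add: K_def Kset_def d_def n_def)
  have mle: "\<And>a. a \<in> G \<Longrightarrow> d a > 0 \<Longrightarrow> m \<le> d a"
  proof -
    fix a assume "a \<in> G" "d a > 0"
    moreover have "finite {dist_at G f g a | a. a \<in> G \<and> dist_at G f g a > 0}"
      using fin by (rule finite_subset[rotated, OF finite_imageI[of G "dist_at G f g"]]) auto
    ultimately show "m \<le> d a" unfolding m_def mmin_def d_def by (intro Min_le) auto
  qed
  have qle: "\<And>a. a \<in> G \<Longrightarrow> a \<notin> K \<Longrightarrow> q \<le> int (d a)"
  proof -
    fix a assume "a \<in> G" "a \<notin> K"
    hence "real n / 3 \<le> real (d a)" by (auto simp: K_def Kset_def d_def n_def)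
    thus "q \<le> int (d a)" unfolding q_def qval_def n_def by (simp add: ceiling_le_iff)
  qed
  have dlt: "\<And>a. a \<in> K \<Longrightarrow> int (d a) < q"
  proof -
    fix a assume "a \<in> K"
    hence "real (d a) < real n / 3" by (auto simp: K_def Kset_def d_def n_def)
    also have "\<dots> \<le> of_int q" unfolding q_def qval_def n_def by (rule le_of_int_ceiling)
    finally show "int (d a) < q" by linarith
  qed
  define w where "w a = int (d a) - (if a \<in> H then 0 else if a \<in> K then int m else q)" for a
  have wnn: "\<And>a. a \<in> G \<Longrightarrow> w a \<ge> 0"
  proof -
    fix a assume aG: "a \<in> G"
    show "w a \<ge> 0"
    proof (cases "a \<in> H")
      case False
      show ?thesis
      proof (cases "a \<in> K")
        case True
        have "d a > 0" using False aG by (auto simp: H_def Hset_def d_def)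
        thus ?thesis using mle[OF aG] False True by (simp add: w_def)
      qed (use qle[OF aG] False in \<open>simp add: w_def\<close>)
    qed (simp add: w_def)
  qed
  have dist_sum: "distop G f g = (\<Sum>a\<in>G. d a)"
  proof -
    have "diffset G f g = Sigma G (\<lambda>a. {b\<in>G. f a b \<noteq> g a b})" by (auto simp: diffset_def)
    thus ?thesis using fin by (simp add: distop_def d_def dist_at_def)
  qed
  have cardKH: "card (K - H) = card K - card H" "card H \<le> card K"
    using HK fin KG by (auto intro: card_Diff_subset card_mono finite_subset)
  have cardGK: "card (G - K) = card G - card K" "card K \<le> card G"
    using fin KG by (auto intro: card_Diff_subset card_mono finite_subset)
  have sumif: "(\<Sum>a\<in>G. (if a \<in> H then 0 else if a \<in> K then int m else q))
      = int (card (K - H)) * int m + int (card (G - K)) * q"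
  proof -
    have "(\<Sum>a\<in>G. (if a \<in> H then 0 else if a \<in> K then int m else q))
        = (\<Sum>a\<in>G - H. (if a \<in> K then int m else q))"
      using fin HG by (subst sum.If_cases) (auto simp: Diff_eq)
    also have "\<dots> = (\<Sum>a\<in>K - H. int m) + (\<Sum>a\<in>G - K. q)"
    proof -
      have "(G - H) \<inter> {x. x \<in> K} = K - H" "(G - H) \<inter> - {x. x \<in> K} = G - K" using HK KG by auto
      thus ?thesis using fin by (subst sum.If_cases) auto
    qed
    finally show ?thesis by simp
  qed
  have profit_sum: "profit G f g = (\<Sum>a\<in>G. w a)"
  proof -
    have "(\<Sum>a\<in>G. w a) = (\<Sum>a\<in>G. int (d a)) - (\<Sum>a\<in>G. (if a \<in> H then 0 else if a \<in> K then int m else q))"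
      unfolding w_def by (simp add: sum_subtractf)
    also have "\<dots> = int (distop G f g) - (int (card (K - H)) * int m + int (card (G - K)) * q)"
      using dist_sum sumif by simp
    finally show ?thesis using cardKH cardGK
      by (simp add: profit_def K_def H_def m_def q_def of_nat_diff)
  qed
  have pnn: "profit G f g \<ge> 0" using profit_sum wnn by (simp add: sum_nonneg)
  define R0 where "R0 = {a\<in>G. f a a \<noteq> g a a \<and> a \<in> K}"
  have R0G: "R0 \<subseteq> G" and R0K: "R0 \<subseteq> K" by (auto simp: R0_def)
  have cardR: "card (Rset G f g) = card R0"
  proof -
    have "Rset G f g = (\<lambda>a. (a, a)) ` R0" by (auto simp: Rset_def diffset_def R0_def K_def)
    moreover have "inj_on (\<lambda>a. (a, a)) R0" by (auto intro: inj_onI)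
    ultimately show ?thesis by (simp add: card_image)
  qed
  show ?thesis
  proof (cases "X \<le> 0")
    case True
    have "\<lceil>real (card (Rset G f g)) / 2\<rceil> \<ge> 0" by simp
    hence "\<lceil>real (card (Rset G f g)) / 2\<rceil> * X \<le> 0" using True by (simp add: mult_nonneg_nonpos)
    thus ?thesis using pnn by (simp add: X_def n_def q_def m_def)
  next
    case False
    define sq where "sq a = f a a" for a
    define S where "S = sq ` R0"
    have key: "\<And>a. a \<in> R0 \<Longrightarrow> n \<le> 2 * d a + d (sq a)"
      using row_sq[OF fin g1 g2] by (auto simp: R0_def n_def d_def sq_def)
    have sqnK: "\<And>a. a \<in> R0 \<Longrightarrow> sq a \<notin> K \<and> sq a \<in> G"
    proof -
      fix a assume aR: "a \<in> R0"
      have "real (d a) < real n / 3" using aR by (auto simp: R0_def K_def Kset_def d_def n_def)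
      moreover have "real n \<le> 2 * real (d a) + real (d (sq a))" using key[OF aR] by linarith
      ultimately have "\<not> real (d (sq a)) < real n / 3" by linarith
      moreover have "sq a \<in> G" using aR fcl by (auto simp: R0_def sq_def)
      ultimately show "sq a \<notin> K \<and> sq a \<in> G" by (auto simp: K_def Kset_def d_def n_def)
    qed
    have SG: "S \<subseteq> G" and SK: "S \<inter> K = {}" using sqnK by (auto simp: S_def)
    have finS: "finite S" using SG fin finite_subset by blast
    have sr: "\<And>c. c \<in> G \<Longrightarrow> c \<noteq> e \<Longrightarrow> card {x\<in>G. f x x = c} \<le> 2"
      using group.sqroots_le2[OF g1, of p] fin assms(6,7) by simp
    have "card R0 \<le> card (\<Union>c\<in>S. {x\<in>G. f x x = c})"
      using fin by (intro card_mono) (auto simp: S_def R0_def sq_def)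
    also have "\<dots> \<le> (\<Sum>c\<in>S. card {x\<in>G. f x x = c})" using finS by (rule card_UN_le)
    also have "\<dots> \<le> (\<Sum>c\<in>S. 2)"
      using sr SG SK eK by (intro sum_mono) auto
    finally have r2: "card R0 \<le> 2 * card S" by simp
    define sel where "sel = inv_into R0 sq"
    have sel: "\<And>c. c \<in> S \<Longrightarrow> sel c \<in> R0 \<and> sq (sel c) = c"
      unfolding sel_def S_def by (auto intro: inv_into_into f_inv_into_f)
    have injsel: "inj_on sel S" unfolding sel_def S_def by (rule inj_on_inv_into) simp
    define A where "A = sel ` S"
    have AR: "A \<subseteq> R0" using sel by (auto simp: A_def)
    have SA: "S \<inter> A = {}" using AR R0K SK by auto
    have finA: "finite A" using finS by (simp add: A_def)
    have pair: "\<And>c. c \<in> S \<Longrightarrow> w c + w (sel c) \<ge> X"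
    proof -
      fix c assume cS: "c \<in> S"
      define a where "a = sel c"
      have aR: "a \<in> R0" and ca: "c = sq a" using sel[OF cS] by (auto simp: a_def)
      have aG: "a \<in> G" and aK: "a \<in> K" using aR by (auto simp: R0_def)
      have "d a > 0" using dpos[OF aG aG] aR by (auto simp: R0_def)
      hence aH: "a \<notin> H" by (auto simp: H_def Hset_def d_def)
      have wa: "w a = int (d a) - int m" using aH aK by (simp add: w_def)
      have cK: "c \<notin> K" using SK cS by auto
      hence wc: "w c = int (d c) - q" using HK by (auto simp: w_def)
      have "n \<le> 2 * d a + d c" using key[OF aR] ca by simp
      moreover have "int (d a) < q" using dlt[OF aK] .
      ultimately show "w c + w (sel c) \<ge> X" using wa wc by (simp add: a_def[symmetric] X_def)
    qed
    have "(\<Sum>c\<in>S. X) \<le> (\<Sum>c\<in>S. w c + w (sel c))" using pair by (rule sum_mono)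
    also have "\<dots> = (\<Sum>c\<in>S. w c) + (\<Sum>c\<in>A. w c)"
      by (simp add: sum.distrib A_def sum.reindex[OF injsel])
    also have "\<dots> = (\<Sum>c\<in>S \<union> A. w c)" using finS finA SA by (simp add: sum.union_disjoint)
    also have "\<dots> \<le> (\<Sum>c\<in>G. w c)"
      using fin SG AR R0G wnn by (intro sum_mono2) auto
    finally have main: "int (card S) * X \<le> profit G f g" using profit_sum by simp
    have "real (card R0) / 2 \<le> real (card S)" using r2 by simp
    hence "\<lceil>real (card R0) / 2\<rceil> \<le> int (card S)" by (simp add: ceiling_le_iff)
    hence "\<lceil>real (card R0) / 2\<rceil> * X \<le> int (card S) * X" using False by (intro mult_right_mono) auto
    thus ?thesis using main cardR by (simp add: X_def n_def q_def m_def)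
  qed
qed

end
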